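(* Let $m>0$, let $n$ be an odd positive integer, let $\epsilon>0$, and let $V=[-m/2,m/2]$. For every $\epsilon$-differentially private facility location mechanism $\mathcal{M}:V^n\to V$ there exists a dataset $D\in V^n$ such that $$\mathrm{FAIR}(D,\mathcal{M}(D))\ge m/2$$ with probability at least $\frac{1}{1+e^{\epsilon}}$ (over the randomness of $\mathcal{M}$).
   Context: A dataset is $D=(x_1,\dots,x_n)\in V^n$ of agent locations, treated as a multiset and indexed so that $x_1\le x_2\le\dots\le x_n$. Since $n$ is odd, the optimal (social-welfare maximizing) facility location is the median $\mathcal{T}(D)=x_{\lceil n/2\rceil}$. Agent $i$'s utility for a facility at $\ell$ is $-|x_i-\ell|$. The individual loss vector is $\mathrm{LOSS}(D,\ell)_i=-|x_i-\mathcal{T}(D)|+|x_i-\ell|$ and $\mathrm{FAIR}(D,\ell)=\max_{1\le i\le n}\mathrm{LOSS}(D,\ell)_i$. Two datasets are neighboring if, as multisets, they differ in exactly one element (one agent's location is changed). A randomized mechanism $\mathcal{M}:V^n\to V$ is $\epsilon$-differentially private if $\Pr[\mathcal{M}(D)\in S]\le e^{\epsilon}\Pr[\mathcal{M}(D')\in S]$ for all neighboring $D,D'$ and all measurable $S\subseteq V$. *)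

theory Defs
  imports "HOL-Probability.Probability" "HOL-Library.Multiset"
begin

definition dataset_in :: "nat \<Rightarrow> real set \<Rightarrow> real multiset \<Rightarrow> bool" where
  "dataset_in n V D \<longleftrightarrow> size D = n \<and> set_mset D \<subseteq> V"

text \<open>Median T(D) = x_{ceil(n/2)} (1-indexed, sorted) = sorted list at index n div 2 (0-indexed), n odd.\<close>
definition opt_loc :: "real multiset \<Rightarrow> real" where
  "opt_loc D = sorted_list_of_multiset D ! (size D div 2)"

definition LOSS :: "real multiset \<Rightarrow> real \<Rightarrow> real \<Rightarrow> real" where
  "LOSS D l x = - \<bar>x - opt_loc D\<bar> + \<bar>x - l\<bar>"

definition FAIR :: "real multiset \<Rightarrow> real \<Rightarrow> real" where
  "FAIR D l = Max ((\<lambda>x. LOSS D l x) ` set_mset D)"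

text \<open>Neighboring: as multisets they differ in exactly one element (one location changed).\<close>
definition neighboring :: "real multiset \<Rightarrow> real multiset \<Rightarrow> bool" where
  "neighboring D D' \<longleftrightarrow> size D = size D' \<and> size (D - D') = 1"

definition mechanism :: "nat \<Rightarrow> real set \<Rightarrow> (real multiset \<Rightarrow> real measure) \<Rightarrow> bool" where
  "mechanism n V M \<longleftrightarrow> (\<forall>D. dataset_in n V D \<longrightarrow>
      prob_space (M D) \<and> sets (M D) = sets borel \<and> measure (M D) V = 1)"

definition diff_private :: "real \<Rightarrow> nat \<Rightarrow> real set \<Rightarrow> (real multiset \<Rightarrow> real measure) \<Rightarrow> bool" where
  "diff_private \<epsilon> n V M \<longleftrightarrow> (\<forall>D D' S. dataset_in n V D \<longrightarrow> dataset_in n V D' \<longrightarrow>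
      neighboring D D' \<longrightarrow> S \<in> sets borel \<longrightarrow>
      measure (M D) S \<le> exp \<epsilon> * measure (M D') S)"

end

theory Submission
  imports Defs
begin

lemma fair_ge:
  assumes "x \<in># D" "c \<le> LOSS D l x"
  shows "c \<le> FAIR D l"
  unfolding FAIR_def using assms
  by (subst Max_ge_iff) auto

lemma fair_set_meas: "{l. c \<le> FAIR D l} \<in> sets borel"
proof (cases "D = {#}")
  case True
  then have "{l. c \<le> FAIR D l} = UNIV \<or> {l. c \<le> FAIR D l} = {}"
    by (auto simp: FAIR_def)
  then show ?thesis by auto
next
  case False
  have eq: "{l. c \<le> FAIR D l} = (\<Union>x\<in>set_mset D. {l. c \<le> LOSS D l x})"
    unfolding FAIR_def using False by (subst Max_ge_iff; auto)+
  have "\<And>x. {l. c \<le> LOSS D l x} \<in> sets borel"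
    unfolding LOSS_def by measurable
  then show ?thesis unfolding eq by (intro sets.finite_UN) auto
qed

theorem theorem5p1:
  fixes m \<epsilon> :: real and n :: nat and M :: "real multiset \<Rightarrow> real measure"
  assumes "m > 0" and "odd n" and "\<epsilon> > 0"
    and "mechanism n {-m/2..m/2} M"
    and "diff_private \<epsilon> n {-m/2..m/2} M"
  shows "\<exists>D. dataset_in n {-m/2..m/2} D \<and>
           measure (M D) {l. FAIR D l \<ge> m/2} \<ge> 1 / (1 + exp \<epsilon>)"
proof -
  define k where "k = n div 2"
  have n: "n = Suc (2*k)" using assms(2) k_def by presburger
  define a :: real where "a = -m/2"
  define b :: real where "b = m/2"
  have ab: "a < b" using assms(1) by (simp add: a_def b_def)
  define D1 where "D1 = mset (replicate (Suc k) a @ replicate k b)"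
  define D2 where "D2 = mset (replicate k a @ replicate (Suc k) b)"
  have s1: "sorted (replicate (Suc k) a @ replicate k b)" using ab
    by (auto simp: sorted_append)
  have s2: "sorted (replicate k a @ replicate (Suc k) b)" using ab
    by (auto simp: sorted_append)
  have sl1: "sorted_list_of_multiset D1 = replicate (Suc k) a @ replicate k b"
    unfolding D1_def sorted_list_of_multiset_mset by (rule sorted_sort_id[OF s1])
  have sl2: "sorted_list_of_multiset D2 = replicate k a @ replicate (Suc k) b"
    unfolding D2_def sorted_list_of_multiset_mset by (rule sorted_sort_id[OF s2])
  have sz1: "size D1 = n" and sz2: "size D2 = n" using n by (simp_all add: D1_def D2_def)
  have o1: "opt_loc D1 = a" unfolding opt_loc_def sl1 sz1 using n
    by (simp add: nth_append del: replicate_Suc)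
  have o2: "opt_loc D2 = b" unfolding opt_loc_def sl2 sz2 using n
    by (cases k) (simp_all add: nth_append)
  have in1: "a \<in># D1" by (simp add: D1_def)
  have in2: "b \<in># D2" by (simp add: D2_def)
  have ds1: "dataset_in n {-m/2..m/2} D1" using sz1 assms(1)
    by (auto simp: dataset_in_def D1_def a_def b_def)
  have ds2: "dataset_in n {-m/2..m/2} D2" using sz2 assms(1)
    by (auto simp: dataset_in_def D2_def a_def b_def)
  have "D1 - D2 = {#a#}"
  proof (rule multiset_eqI)
    fix x show "count (D1 - D2) x = count {#a#} x"
      using ab by (auto simp: D1_def D2_def count_mset)
  qed
  then have nb: "neighboring D1 D2" using sz1 sz2 by (simp add: neighboring_def)
  define S1 where "S1 = {l. FAIR D1 l \<ge> m/2}"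
  define S2 where "S2 = {l. FAIR D2 l \<ge> m/2}"
  have S1m: "S1 \<in> sets borel" and S2m: "S2 \<in> sets borel"
    unfolding S1_def S2_def by (rule fair_set_meas)+
  have sub1: "{0..} \<subseteq> S1"
  proof
    fix l :: real assume "l \<in> {0..}"
    then have "m/2 \<le> LOSS D1 l a" using assms(1) by (simp add: LOSS_def o1 a_def abs_if)
    then have "m/2 \<le> FAIR D1 l" by (rule fair_ge[OF in1])
    then show "l \<in> S1" using S1_def by auto
  qed
  have sub2: "{..<0} \<subseteq> S2"
  proof
    fix l :: real assume "l \<in> {..<0}"
    then have "m/2 \<le> LOSS D2 l b" using assms(1) by (simp add: LOSS_def o2 b_def abs_if)
    then have "m/2 \<le> FAIR D2 l" by (rule fair_ge[OF in2])
    then show "l \<in> S2" using S2_def by auto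
  qed
  have P1: "prob_space (M D1)" "sets (M D1) = sets borel"
    using assms(4) ds1 by (auto simp: mechanism_def)
  have P2: "prob_space (M D2)" "sets (M D2) = sets borel"
    using assms(4) ds2 by (auto simp: mechanism_def)
  have sp1: "space (M D1) = UNIV" using sets_eq_imp_space_eq[OF P1(2)] by simp
  have m1: "measure (M D1) {0..} \<le> measure (M D1) S1"
    using P1 S1m sub1 by (intro finite_measure.finite_measure_mono prob_space.finite_measure) auto
  have m2: "measure (M D2) {..<0} \<le> measure (M D2) S2"
    using P2 S2m sub2 by (intro finite_measure.finite_measure_mono prob_space.finite_measure) auto
  have compl: "measure (M D1) {0..} = 1 - measure (M D1) {..<0}"
  proof -
    have "{0..} = space (M D1) - {..<0::real}" using sp1 by auto
    then show ?thesis using prob_space.prob_compl[OF P1(1), of "{..<0}"] P1(2) by simp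
  qed
  have dp: "measure (M D1) {..<0} \<le> exp \<epsilon> * measure (M D2) {..<0}"
    using assms(5) ds1 ds2 nb unfolding diff_private_def by auto
  have ep: "exp \<epsilon> > 0" by simp
  show ?thesis
  proof (cases "measure (M D1) {0..} \<ge> 1 / (1 + exp \<epsilon>)")
    case True then show ?thesis using ds1 m1 S1_def by (intro exI[of _ D1]) auto
  next
    case False
    then have "measure (M D1) {..<0} > exp \<epsilon> / (1 + exp \<epsilon>)"
    proof -
      have "measure (M D1) {..<0} * (1 + exp \<epsilon>) > exp \<epsilon>"
        using False compl ep by (simp add: field_simps)
      then show ?thesis using ep by (simp add: pos_divide_less_eq add_pos_pos)
    qed
    then have "exp \<epsilon> * measure (M D2) {..<0} > exp \<epsilon> * (1 / (1 + exp \<epsilon>))"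
      using dp by simp
    then have "measure (M D2) {..<0} > 1 / (1 + exp \<epsilon>)"
      using ep mult_less_cancel_left_pos by blast
    then show ?thesis using ds2 m2 S2_def by (intro exI[of _ D2]) auto
  qed
qed

end
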